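(* Let $C_h$ be the set of all $\theta \in [\pi/3,\pi/2]$ such that $\theta = \theta(\Gamma)$ for some $\Gamma \in \mathrm{WR}(\Lambda_h)$. Then $\theta \in C_h$ if and only if $$\cos\theta = \frac{1}{2}\cdot\frac{|n^2+2mn-2m^2|}{n^2-mn+m^2}$$ for some $m,n \in \mathbb{Z}$ with $\gcd(m,n)=1$, $1 \le m/n \le 2$ and $3 \nmid (m+n)$. Moreover, for $\theta \in C_h$ and such integers $m,n$ corresponding to $\theta$, let $$\Gamma_\theta = \frac12\begin{bmatrix} m+n & m-2n \\ (m-n)\sqrt3 & m\sqrt3\end{bmatrix}\mathbb{Z}^2 .$$ Then $\Gamma_\theta \subseteq \Lambda_h$, the similarity class $C_h(\theta)$ equals the set of all $\Omega \in \mathrm{WR}(\Lambda_h)$ similar to $\Gamma_\theta$, and for every $\Gamma \in C_h(\theta)$, $$|\Gamma| \ge |\Gamma_\theta| = n^2-mn+m^2, \qquad |\Lambda_h:\Gamma| \ge |\Lambda_h:\Gamma_\theta| = (2m-n)n .$$ Furthermore, $$C_h(\theta) = \{\sqrt{k}\,A\,\Gamma_\theta \subseteq \Lambda_h : k \in \mathbb{Z}_{>0},\ A \in O_2(\mathbb{R})\}.$$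
   Context: $\Lambda_h = \begin{bmatrix} 1 & -1/2 \\ 0 & \sqrt3/2\end{bmatrix}\mathbb{Z}^2 \subset \mathbb{R}^2$ is the hexagonal lattice. For a lattice $\Gamma = A\mathbb{Z}^2\subset\mathbb{R}^2$ of full rank, $\det(\Gamma)=|\det A|$, and its minimum is $|\Gamma| = \min\{\|y\|^2 : y \in \Gamma\setminus\{0\}\}$ (squared Euclidean norm); vectors attaining it are minimal vectors. For a sublattice $\Gamma\subseteq\Lambda_h$ of full rank, $|\Lambda_h:\Gamma| = \det(\Gamma)/\det(\Lambda_h)$. $\Gamma$ is well-rounded (WR) if it has a basis consisting of minimal vectors (a minimal basis); such a minimal basis can always be chosen with angle between the two vectors in $[\pi/3,\pi/2]$, and this angle is an invariant of $\Gamma$, called the angle $\theta(\Gamma)$. $\mathrm{WR}(\Lambda_h)$ denotes the set of WR sublattices of $\Lambda_h$ (of full rank). Two lattices $\Gamma_1,\Gamma_2$ are similar if $\Gamma_2 = \alpha A\Gamma_1$ for some nonzero real $\alpha$ and $A \in O_2(\mathbb{R})$; two WR lattices are similar iff they have the same angle. For $\theta\in C_h$, $C_h(\theta)$ denotes the set of all $\Omega\in\mathrm{WR}(\Lambda_h)$ with $\theta(\Omega)=\theta$. *)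

theory Defs
  imports "HOL-Analysis.Analysis"
begin

text \<open>Vectors of the plane are elements of real^2; 2x2 real matrices are real^2^2.
  A matrix A acts by A *v x, so the lattice A Z^2 is generated by the columns of A.\<close>

definition int_vecs :: "(real^2) set" where
  "int_vecs = {z. \<forall>i. z $ i \<in> \<int>}"

definition lattice_of :: "real^2^2 \<Rightarrow> (real^2) set" where
  "lattice_of A = (\<lambda>z. A *v z) ` int_vecs"

definition is_lattice :: "(real^2) set \<Rightarrow> bool" where
  "is_lattice L \<longleftrightarrow> (\<exists>A. det A \<noteq> 0 \<and> L = lattice_of A)"

text \<open>det(Gamma) = |det A| for any basis matrix A (independent of the choice of A).\<close>
definition lat_det :: "(real^2) set \<Rightarrow> real" where
  "lat_det L = (THE d. \<exists>A. det A \<noteq> 0 \<and> L = lattice_of A \<and> d = \<bar>det A\<bar>)"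

definition lat_min :: "(real^2) set \<Rightarrow> real" where
  "lat_min L = Inf {(norm y)\<^sup>2 | y. y \<in> L \<and> y \<noteq> 0}"

definition minimal_vector :: "(real^2) set \<Rightarrow> real^2 \<Rightarrow> bool" where
  "minimal_vector L x \<longleftrightarrow> x \<in> L \<and> x \<noteq> 0 \<and> (norm x)\<^sup>2 = lat_min L"

definition cols :: "real^2 \<Rightarrow> real^2 \<Rightarrow> real^2^2" where
  "cols x y = (\<chi> i j. if j = 1 then x $ i else y $ i)"

definition lattice_basis :: "(real^2) set \<Rightarrow> real^2 \<Rightarrow> real^2 \<Rightarrow> bool" where
  "lattice_basis L x y \<longleftrightarrow> det (cols x y) \<noteq> 0 \<and> L = lattice_of (cols x y)"

definition minimal_basis :: "(real^2) set \<Rightarrow> real^2 \<Rightarrow> real^2 \<Rightarrow> bool" where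
  "minimal_basis L x y \<longleftrightarrow> lattice_basis L x y \<and> minimal_vector L x \<and> minimal_vector L y"

definition well_rounded :: "(real^2) set \<Rightarrow> bool" where
  "well_rounded L \<longleftrightarrow> is_lattice L \<and> (\<exists>x y. minimal_basis L x y)"

definition vec_angle :: "real^2 \<Rightarrow> real^2 \<Rightarrow> real" where
  "vec_angle x y = arccos ((x \<bullet> y) / (norm x * norm y))"

text \<open>The angle theta(Gamma) of a WR lattice: the angle of a minimal basis chosen with
  angle in [pi/3, pi/2] (this angle is an invariant of Gamma).\<close>
definition lattice_angle :: "(real^2) set \<Rightarrow> real" where
  "lattice_angle L = (THE t. \<exists>x y. minimal_basis L x y \<and> t = vec_angle x y
                               \<and> pi/3 \<le> t \<and> t \<le> pi/2)"

definition hex_matrix :: "real^2^2" where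
  "hex_matrix = (\<chi> i j. if i = 1 then (if j = 1 then 1 else -1/2)
                        else (if j = 1 then 0 else sqrt 3 / 2))"

definition Lambda_h :: "(real^2) set" where
  "Lambda_h = lattice_of hex_matrix"

definition WR_hex :: "(real^2) set set" where
  "WR_hex = {G. is_lattice G \<and> G \<subseteq> Lambda_h \<and> well_rounded G}"

definition lat_index :: "(real^2) set \<Rightarrow> real" where
  "lat_index G = lat_det G / lat_det Lambda_h"

definition similar :: "(real^2) set \<Rightarrow> (real^2) set \<Rightarrow> bool" where
  "similar G1 G2 \<longleftrightarrow> (\<exists>(\<alpha>::real) A. \<alpha> \<noteq> 0 \<and> orthogonal_matrix A
                        \<and> G2 = (\<lambda>x. \<alpha> *\<^sub>R (A *v x)) ` G1)"

definition C_h :: "real set" where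
  "C_h = {t. pi/3 \<le> t \<and> t \<le> pi/2 \<and> (\<exists>G\<in>WR_hex. t = lattice_angle G)}"

definition C_h_class :: "real \<Rightarrow> (real^2) set set" where
  "C_h_class t = {G \<in> WR_hex. lattice_angle G = t}"

definition Gamma_mat :: "int \<Rightarrow> int \<Rightarrow> real^2^2" where
  "Gamma_mat m n = (\<chi> i j. (1/2) * (if i = 1 then (if j = 1 then of_int (m + n) else of_int (m - 2*n))
                        else (if j = 1 then of_int (m - n) * sqrt 3 else of_int m * sqrt 3)))"

definition Gamma_theta :: "int \<Rightarrow> int \<Rightarrow> (real^2) set" where
  "Gamma_theta m n = lattice_of (Gamma_mat m n)"

definition hex_param :: "real \<Rightarrow> int \<Rightarrow> int \<Rightarrow> bool" where
  "hex_param t m n \<longleftrightarrow> coprime m n \<and> 1 \<le> real_of_int m / real_of_int n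
     \<and> real_of_int m / real_of_int n \<le> 2 \<and> \<not> (3 dvd (m + n))
     \<and> cos t = (1/2) * (\<bar>real_of_int (n^2 + 2*m*n - 2*m^2)\<bar> / real_of_int (n^2 - m*n + m^2))"

end

theory Submission
  imports Defs
begin

lemma two_ne1[simp]: "(2::2) \<noteq> 1" by (metis exhaust_2 one_neq_zero num.distinct(1) zero_neq_numeral)

lemma cols_nth[simp]: "cols x y $ i $ 1 = x $ i" "cols x y $ i $ 2 = y $ i"
  by (auto simp: cols_def)

lemma det_cols: "det (cols x y) = x$1*y$2 - y$1*x$2"
  by (simp add: det_2)

lemma vec2_eq: "(u::real^2) = v \<longleftrightarrow> u$1 = v$1 \<and> u$2 = v$2"
  by (auto simp: vec_eq_iff forall_2)

lemma inner2: "(x::real^2) \<bullet> y = x$1*y$1 + x$2*y$2"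
  by (simp add: inner_vec_def sum_2)

lemma cols_mulv: "cols x y *v z = z$1 *\<^sub>R x + z$2 *\<^sub>R y"
  by (simp add: vec2_eq matrix_vector_mult_def sum_2 mult.commute)

lemma mat_cols: "(A::real^2^2) = cols (\<chi> i. A$i$1) (\<chi> i. A$i$2)"
  by (auto simp: vec_eq_iff forall_2 cols_def)

lemma lattice_of_cols: "lattice_of (cols x y) = {of_int i *\<^sub>R x + of_int j *\<^sub>R y | i j. True}"
proof -
  have "\<exists>i j. z $ 1 *\<^sub>R x + z $ 2 *\<^sub>R y = real_of_int i *\<^sub>R x + real_of_int j *\<^sub>R y" if "z \<in> int_vecs" for z
  proof -
    from that have "z$1 \<in> \<int>" "z$2 \<in> \<int>" by (auto simp: int_vecs_def)
    then obtain i j where "z$1 = of_int i" "z$2 = of_int j" by (metis Ints_cases)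
    thus ?thesis by auto
  qed
  moreover have "\<exists>z\<in>int_vecs. real_of_int i *\<^sub>R x + real_of_int j *\<^sub>R y = z $ 1 *\<^sub>R x + z $ 2 *\<^sub>R y" for i j
    by (rule bexI[of _ "vector [of_int i, of_int j]"]) (auto simp: int_vecs_def forall_2)
  ultimately show ?thesis unfolding lattice_of_def cols_mulv by blast
qed

lemma mem_lat: "z \<in> lattice_of (cols x y) \<longleftrightarrow> (\<exists>i j. z = of_int i *\<^sub>R x + of_int j *\<^sub>R y)"
  by (auto simp: lattice_of_cols)

lemma is_lattice_cols: "is_lattice L \<longleftrightarrow> (\<exists>x y. det (cols x y) \<noteq> 0 \<and> L = lattice_of (cols x y))"
  unfolding is_lattice_def by (metis mat_cols)

lemma lagrange2: "(det (cols x y))\<^sup>2 = (x \<bullet> x) * (y \<bullet> y) - (x \<bullet> y)\<^sup>2"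
  by (simp add: det_cols inner2 power2_eq_square algebra_simps)

lemma gb_basis_in: "x \<in> lattice_of (cols x y)" "y \<in> lattice_of (cols x y)"
  unfolding mem_lat by (metis add.right_neutral add_0 of_int_0 of_int_1 scaleR_one scaleR_zero_left)+

lemma det_unique:
  assumes "det (cols x y) \<noteq> 0" "det (cols u v) \<noteq> 0" "lattice_of (cols x y) = lattice_of (cols u v)"
  shows "\<bar>det (cols x y)\<bar> = \<bar>det (cols u v)\<bar>"
proof -
  have "u \<in> lattice_of (cols x y)" "v \<in> lattice_of (cols x y)"
    using gb_basis_in assms(3) by auto
  then obtain a b c d where u: "u = of_int a *\<^sub>R x + of_int b *\<^sub>R y" and v: "v = of_int c *\<^sub>R x + of_int d *\<^sub>R y"
    unfolding mem_lat by metis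
  have "x \<in> lattice_of (cols u v)" "y \<in> lattice_of (cols u v)"
    using gb_basis_in assms(3) by auto
  then obtain a' b' c' d' where x: "x = of_int a' *\<^sub>R u + of_int b' *\<^sub>R v" and y: "y = of_int c' *\<^sub>R u + of_int d' *\<^sub>R v"
    unfolding mem_lat by metis
  have e1: "det (cols u v) = of_int (a*d - b*c) * det (cols x y)"
    unfolding u v det_cols by (simp add: algebra_simps)
  have e2: "det (cols x y) = of_int (a'*d' - b'*c') * det (cols u v)"
    unfolding x y det_cols by (simp add: algebra_simps)
  have "of_int ((a'*d' - b'*c') * (a*d - b*c)) * det (cols x y) = 1 * det (cols x y)"
    using e1 e2 by (simp add: mult.assoc)
  hence "(a'*d' - b'*c') * (a*d - b*c) = 1"
    using assms(1) by (metis mult_right_cancel of_int_1 of_int_eq_iff)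
  hence "\<bar>a*d - b*c\<bar> = 1" by (auto simp: zmult_eq_1_iff)
  hence "\<bar>of_int (a*d - b*c)\<bar> = (1::real)" by (metis of_int_1 of_int_abs)
  thus ?thesis using e1 by (metis abs_mult mult_1)
qed

lemma lat_det_cols:
  assumes "det (cols x y) \<noteq> 0"
  shows "lat_det (lattice_of (cols x y)) = \<bar>det (cols x y)\<bar>"
  unfolding lat_det_def
proof (rule the_equality)
  show "\<exists>A. det A \<noteq> 0 \<and> lattice_of (cols x y) = lattice_of A \<and> \<bar>det (cols x y)\<bar> = \<bar>det A\<bar>"
    using assms by blast
next
  fix d assume "\<exists>A. det A \<noteq> 0 \<and> lattice_of (cols x y) = lattice_of A \<and> d = \<bar>det A\<bar>"
  then obtain A where A: "det A \<noteq> 0" "lattice_of (cols x y) = lattice_of A" "d = \<bar>det A\<bar>" by blast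
  show "d = \<bar>det (cols x y)\<bar>"
    using det_unique[OF assms, of "\<chi> i. A$i$1" "\<chi> i. A$i$2"] A mat_cols[of A] by metis
qed

definition gb :: "real^2 \<Rightarrow> real^2 \<Rightarrow> bool" where
  "gb x y \<longleftrightarrow> det (cols x y) \<noteq> 0 \<and> x \<bullet> x = y \<bullet> y \<and> 2 * \<bar>x \<bullet> y\<bar> \<le> x \<bullet> x"

lemma int_form_ge1:
  fixes i j :: int assumes "\<not> (i = 0 \<and> j = 0)"
  shows "i*i + j*j - \<bar>i*j\<bar> \<ge> 1"
proof (cases "i*j = 0")
  case True
  hence "i = 0 \<or> j = 0" by simp
  thus ?thesis
  proof (elim disjE)
    assume i: "i = 0"
    hence "j \<noteq> 0" using assms by simp
    hence "0 < j*j" by (simp add: zero_less_mult_iff) linarith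
    thus ?thesis using i by simp
  next
    assume j: "j = 0"
    hence "i \<noteq> 0" using assms by simp
    hence "0 < i*i" by (simp add: zero_less_mult_iff) linarith
    thus ?thesis using j by simp
  qed
next
  case False
  have "\<bar>i*j\<bar> \<ge> 1" using False by linarith
  moreover have "i*i + j*j \<ge> 2*\<bar>i*j\<bar>"
  proof -
    have "0 \<le> (\<bar>i\<bar> - \<bar>j\<bar>)^2" by simp
    thus ?thesis by (simp add: power2_eq_square abs_mult algebra_simps)
  qed
  ultimately show ?thesis by linarith
qed

lemma gb_nonzero: assumes "det (cols x y) \<noteq> 0" shows "x \<noteq> 0" "y \<noteq> 0"
  using assms by (auto simp: det_cols)

lemma gb_min:
  assumes g: "gb x y" and z: "z \<in> lattice_of (cols x y)" "z \<noteq> 0"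
  shows "x \<bullet> x \<le> z \<bullet> z"
proof -
  obtain i j where zij: "z = of_int i *\<^sub>R x + of_int j *\<^sub>R y" using z unfolding mem_lat by blast
  have nz: "\<not> (i = 0 \<and> j = 0)" using z zij by auto
  define N where "N = x \<bullet> x"
  define P where "P = x \<bullet> y"
  have yy: "y \<bullet> y = N" using g by (simp add: gb_def N_def)
  have zz: "z \<bullet> z = of_int (i*i + j*j) * N + 2 * of_int (i*j) * P"
    unfolding zij by (simp add: inner_add inner_commute yy N_def P_def algebra_simps)
  have N0: "N \<ge> 0" by (simp add: N_def)
  have hP: "2*\<bar>P\<bar> \<le> N" using g by (simp add: gb_def N_def P_def)
  have k1: "real_of_int (i*i + j*j - \<bar>i*j\<bar>) \<ge> 1" using int_form_ge1[OF nz] by linarith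
  have a: "real_of_int (i*i + j*j - \<bar>i*j\<bar>) * N \<ge> N" using k1 N0 by (metis mult_left_mono mult_1 mult.commute)
  have b: "\<bar>2 * of_int (i*j) * P\<bar> \<le> of_int \<bar>i*j\<bar> * N"
  proof -
    have "\<bar>2 * of_int (i*j) * P\<bar> = of_int \<bar>i*j\<bar> * (2*\<bar>P\<bar>)" by (simp add: abs_mult)
    also have "\<dots> \<le> of_int \<bar>i*j\<bar> * N" using hP by (intro mult_left_mono) auto
    finally show ?thesis .
  qed
  show ?thesis unfolding zz N_def[symmetric] using a b by (simp add: algebra_simps)
qed

lemma lat_min_gb:
  assumes g: "gb x y"
  shows "lat_min (lattice_of (cols x y)) = x \<bullet> x"
  unfolding lat_min_def
proof (rule cInf_eq_minimum)
  have "x \<in> lattice_of (cols x y)" unfolding mem_lat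
    by (metis add.right_neutral of_int_0 of_int_1 scaleR_one scaleR_zero_left)
  moreover have "x \<noteq> 0" using g gb_nonzero by (auto simp: gb_def)
  ultimately show "x \<bullet> x \<in> {(norm z)\<^sup>2 |z. z \<in> lattice_of (cols x y) \<and> z \<noteq> 0}"
    by (intro CollectI exI[of _ x]) (auto simp: power2_norm_eq_inner)
next
  fix r assume "r \<in> {(norm z)\<^sup>2 |z. z \<in> lattice_of (cols x y) \<and> z \<noteq> 0}"
  then show "x \<bullet> x \<le> r" using gb_min[OF g] by (auto simp: power2_norm_eq_inner)
qed

lemma lat_min_le:
  assumes "z \<in> L" "z \<noteq> 0" shows "lat_min L \<le> z \<bullet> z"
  unfolding lat_min_def power2_norm_eq_inner
  by (rule cInf_lower) (use assms in \<open>auto intro!: bdd_belowI[of _ 0]\<close>)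

lemma minimal_basis_gb:
  assumes g: "gb x y"
  shows "minimal_basis (lattice_of (cols x y)) x y"
  using g gb_basis_in gb_nonzero lat_min_gb[OF g]
  by (auto simp: minimal_basis_def lattice_basis_def minimal_vector_def gb_def power2_norm_eq_inner)

lemma lattice_neg: "lattice_of (cols x (-y)) = lattice_of (cols x y)"
proof -
  have "\<And>i j. \<exists>i' j'. of_int i *\<^sub>R x + of_int j *\<^sub>R (-y) = of_int i' *\<^sub>R x + of_int j' *\<^sub>R y"
    by (metis of_int_minus scaleR_minus_left scaleR_minus_right)
  moreover have "\<And>i j. \<exists>i' j'. of_int i *\<^sub>R x + of_int j *\<^sub>R y = of_int i' *\<^sub>R x + of_int j' *\<^sub>R (-y)"
    by (metis minus_minus of_int_minus scaleR_minus_left scaleR_minus_right)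
  ultimately show ?thesis unfolding lattice_of_cols by blast
qed

lemma gb_neg: "gb x y \<Longrightarrow> gb x (-y)"
  by (auto simp: gb_def det_cols)

lemma minimal_basis_props:
  assumes "minimal_basis L x y"
  shows "gb x y" "L = lattice_of (cols x y)"
proof -
  have d: "det (cols x y) \<noteq> 0" and L: "L = lattice_of (cols x y)"
    and mx: "x \<bullet> x = lat_min L" and my: "y \<bullet> y = lat_min L"
    using assms by (auto simp: minimal_basis_def lattice_basis_def minimal_vector_def power2_norm_eq_inner)
  have xy1: "x - y \<in> L" "x - y \<noteq> 0" unfolding L mem_lat using d
    apply (metis add_uminus_conv_diff of_int_1 of_int_minus scaleR_minus_left scaleR_one)
    using d by (auto simp: det_cols)
  have xy2: "x + y \<in> L" "x + y \<noteq> 0" unfolding L mem_lat using d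
    apply (metis of_int_1 scaleR_one)
    using d by (auto simp: det_cols vec2_eq) (metis add.inverse_unique eq_neg_iff_add_eq_0 mult_minus_left mult_minus_right)
  have "lat_min L \<le> (x-y) \<bullet> (x-y)" by (rule lat_min_le[OF xy1])
  moreover have "lat_min L \<le> (x+y) \<bullet> (x+y)" by (rule lat_min_le[OF xy2])
  ultimately have "2*\<bar>x \<bullet> y\<bar> \<le> x \<bullet> x"
    using mx my by (simp add: inner_diff inner_add inner_commute algebra_simps)
  thus "gb x y" using d mx my by (simp add: gb_def)
  show "L = lattice_of (cols x y)" by fact
qed

lemma wr_gb:
  assumes "well_rounded L"
  shows "\<exists>x y. gb x y \<and> L = lattice_of (cols x y)"
  using assms minimal_basis_props unfolding well_rounded_def by blast

lemma gb_wr: "gb x y \<Longrightarrow> well_rounded (lattice_of (cols x y))"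
  unfolding well_rounded_def is_lattice_cols using minimal_basis_gb by (auto simp: gb_def)

lemma gb_is_lattice: "gb x y \<Longrightarrow> is_lattice (lattice_of (cols x y))"
  unfolding is_lattice_cols by (auto simp: gb_def)

lemma norm_prod_eq: "x \<bullet> x = y \<bullet> y \<Longrightarrow> norm x * norm y = x \<bullet> x"
  by (simp add: norm_eq_sqrt_inner)

lemma arccos_half: "arccos (1/2) = pi/3"
  using arccos_cos[of "pi/3"] by (simp add: cos_60)

lemma lattice_angle_gb:
  assumes g: "gb x y"
  shows "lattice_angle (lattice_of (cols x y)) = arccos (\<bar>x \<bullet> y\<bar> / (x \<bullet> x))"
proof -
  define L where "L = lattice_of (cols x y)"
  define N where "N = x \<bullet> x"
  have d: "det (cols x y) \<noteq> 0" and yy: "y \<bullet> y = N" and hP: "2*\<bar>x \<bullet> y\<bar> \<le> N"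
    using g by (auto simp: gb_def N_def)
  have Npos: "N > 0" using gb_nonzero[OF d] by (simp add: N_def)
  define c where "c = \<bar>x \<bullet> y\<bar> / N"
  have c0: "0 \<le> c" and c1: "c \<le> 1/2" using hP Npos by (auto simp: c_def field_simps)
  define y0 where "y0 = (if x \<bullet> y \<ge> 0 then y else -y)"
  have g0: "gb x y0" using g gb_neg by (simp add: y0_def)
  have L0: "lattice_of (cols x y0) = L" by (simp add: y0_def L_def lattice_neg)
  have xy0: "x \<bullet> y0 = \<bar>x \<bullet> y\<bar>" by (simp add: y0_def)
  have y0y0: "y0 \<bullet> y0 = N" by (simp add: y0_def yy)
  have va: "vec_angle x y0 = arccos c"
    unfolding vec_angle_def c_def xy0 using norm_prod_eq[of x y0] y0y0 by (simp add: N_def)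
  have rng: "pi/3 \<le> arccos c" "arccos c \<le> pi/2"
    using arccos_le_arccos[of "c" "1/2"] c0 c1 arccos_half arccos_le_pi2[of c] by auto
  have mb: "minimal_basis L x y0" using minimal_basis_gb[OF g0] L0 by simp
  have minL: "lat_min L = N" using lat_min_gb[OF g] by (simp add: L_def N_def)
  show ?thesis unfolding L_def[symmetric] lattice_angle_def N_def[symmetric] c_def[symmetric]
  proof (rule the_equality)
    show "\<exists>x' y'. minimal_basis L x' y' \<and> arccos c = vec_angle x' y' \<and> pi / 3 \<le> arccos c \<and> arccos c \<le> pi / 2"
      using mb va rng by metis
  next
    fix t assume "\<exists>x' y'. minimal_basis L x' y' \<and> t = vec_angle x' y' \<and> pi / 3 \<le> t \<and> t \<le> pi / 2"
    then obtain x' y' where mb': "minimal_basis L x' y'" and t: "t = vec_angle x' y'" "pi/3 \<le> t" "t \<le> pi/2"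
      by blast
    have g': "gb x' y'" and L': "L = lattice_of (cols x' y')" using minimal_basis_props[OF mb'] by auto
    have "lat_min L = x' \<bullet> x'" using lat_min_gb[OF g'] L' by simp
    hence xx': "x' \<bullet> x' = N" using minL by simp
    have yy': "y' \<bullet> y' = N" using g' xx' by (simp add: gb_def)
    have hP': "2*\<bar>x' \<bullet> y'\<bar> \<le> N" using g' xx' by (simp add: gb_def)
    have "\<bar>det (cols x' y')\<bar> = \<bar>det (cols x y)\<bar>"
      using det_unique[of x' y' x y] g' d L' by (simp add: L_def gb_def)
    hence "(det (cols x' y'))\<^sup>2 = (det (cols x y))\<^sup>2" by (metis power2_abs)
    hence sq: "(x' \<bullet> y')\<^sup>2 = (x \<bullet> y)\<^sup>2" using lagrange2[of x' y'] lagrange2[of x y] xx' yy' yy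
      by (simp add: N_def)
    have np: "norm x' * norm y' = N" using norm_prod_eq[of x' y'] xx' yy' by simp
    have ct: "cos t = x' \<bullet> y' / N"
      unfolding t vec_angle_def np
      using hP' Npos xx' by (intro cos_arccos) (auto simp: field_simps)
    have "cos t \<ge> 0" using t Npos by (intro cos_ge_zero) auto
    moreover have "x' \<bullet> y' = cos t * N" using ct Npos by (simp add: field_simps)
    ultimately have "x' \<bullet> y' \<ge> 0" using Npos by simp
    moreover have "\<bar>x' \<bullet> y'\<bar> = \<bar>x \<bullet> y\<bar>" using sq by (metis real_sqrt_abs)
    ultimately have "x' \<bullet> y' = \<bar>x \<bullet> y\<bar>" by simp
    hence "cos t = c" using ct by (simp add: c_def)
    thus "t = arccos c" using t arccos_cos[of t] by auto
  qed
qed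

lemma lattice_angle_range:
  assumes "gb x y"
  shows "pi/3 \<le> lattice_angle (lattice_of (cols x y))" "lattice_angle (lattice_of (cols x y)) \<le> pi/2"
proof -
  have d: "det (cols x y) \<noteq> 0" and hP: "2*\<bar>x \<bullet> y\<bar> \<le> x \<bullet> x" using assms by (auto simp: gb_def)
  have Npos: "x \<bullet> x > 0" using gb_nonzero[OF d] by simp
  define c where "c = \<bar>x \<bullet> y\<bar> / (x \<bullet> x)"
  have c0: "0 \<le> c" and c1: "c \<le> 1/2" using hP Npos by (auto simp: c_def field_simps)
  show "pi/3 \<le> lattice_angle (lattice_of (cols x y))" "lattice_angle (lattice_of (cols x y)) \<le> pi/2"
    unfolding lattice_angle_gb[OF assms] c_def[symmetric]
    using arccos_le_arccos[of "c" "1/2"] c0 c1 arccos_half arccos_le_pi2[of c] by auto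
qed

lemma cos_lattice_angle:
  assumes "gb x y"
  shows "cos (lattice_angle (lattice_of (cols x y))) = \<bar>x \<bullet> y\<bar> / (x \<bullet> x)"
proof -
  have d: "det (cols x y) \<noteq> 0" and hP: "2*\<bar>x \<bullet> y\<bar> \<le> x \<bullet> x" using assms by (auto simp: gb_def)
  have Npos: "x \<bullet> x > 0" using gb_nonzero[OF d] by simp
  show ?thesis unfolding lattice_angle_gb[OF assms] using hP Npos
    by (intro cos_arccos) (auto simp: field_simps)
qed

lemma orth_inner:
  fixes A :: "real^2^2"
  assumes "orthogonal_matrix A"
  shows "(A *v u) \<bullet> (A *v v) = u \<bullet> v"
proof -
  have "orthogonal_transformation (\<lambda>z. A *v z)"
    using assms orthogonal_transformation_matrix[of "\<lambda>z. A *v z"] by simp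
  thus ?thesis by (simp add: orthogonal_transformation_def)
qed

lemma sim_inner:
  fixes A :: "real^2^2"
  assumes "orthogonal_matrix A"
  shows "(\<alpha> *\<^sub>R (A *v u)) \<bullet> (\<alpha> *\<^sub>R (A *v v)) = \<alpha>\<^sup>2 * (u \<bullet> v)"
  using orth_inner[OF assms] by (simp add: power2_eq_square)

lemma sim_image:
  "(\<lambda>z. \<alpha> *\<^sub>R (A *v z)) ` lattice_of (cols x y) = lattice_of (cols (\<alpha> *\<^sub>R (A *v x)) (\<alpha> *\<^sub>R (A *v y)))"
proof -
  have e: "\<alpha> *\<^sub>R (A *v (cols x y *v z)) = cols (\<alpha> *\<^sub>R (A *v x)) (\<alpha> *\<^sub>R (A *v y)) *v z" for z
    unfolding cols_mulv
    by (simp add: matrix_vector_right_distrib matrix_vector_mult_scaleR scaleR_add_right mult.commute)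
  show ?thesis unfolding lattice_of_def image_image e ..
qed

lemma det_from_gram:
  assumes "u \<bullet> u = a * (x \<bullet> x)" "v \<bullet> v = a * (y \<bullet> y)" "u \<bullet> v = a * (x \<bullet> y)" "a \<ge> 0"
  shows "\<bar>det (cols u v)\<bar> = a * \<bar>det (cols x y)\<bar>"
proof -
  have "(det (cols u v))\<^sup>2 = (u \<bullet> u)*(v \<bullet> v) - (u \<bullet> v)\<^sup>2" by (rule lagrange2)
  also have "\<dots> = a\<^sup>2 * ((x \<bullet> x)*(y \<bullet> y) - (x \<bullet> y)\<^sup>2)" by (simp add: assms power2_eq_square algebra_simps)
  also have "\<dots> = (a * det (cols x y))\<^sup>2" by (simp add: lagrange2 power_mult_distrib)
  finally have sq: "(det (cols u v))\<^sup>2 = (a * det (cols x y))\<^sup>2" .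
  have h1: "a * \<bar>det (cols x y)\<bar> = \<bar>a * det (cols x y)\<bar>" using assms(4) by (simp add: abs_mult)
  have "\<bar>det (cols u v)\<bar>\<^sup>2 = (det (cols u v))\<^sup>2" by (simp only: power2_abs)
  also have "\<dots> = (a * det (cols x y))\<^sup>2" by (rule sq)
  also have "\<dots> = \<bar>a * det (cols x y)\<bar>\<^sup>2" by (simp only: power2_abs)
  also have "\<dots> = (a * \<bar>det (cols x y)\<bar>)\<^sup>2" by (simp only: h1)
  finally have "\<bar>det (cols u v)\<bar>\<^sup>2 = (a * \<bar>det (cols x y)\<bar>)\<^sup>2" .
  thus ?thesis by (rule power2_eq_imp_eq) (use assms(4) in auto)
qed

lemma sim_gb:
  assumes A: "orthogonal_matrix A" and a: "\<alpha> \<noteq> 0" and g: "gb x y"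
  defines "f \<equiv> \<lambda>z. \<alpha> *\<^sub>R (A *v z)"
  shows "gb (f x) (f y)" "\<bar>det (cols (f x) (f y))\<bar> = \<alpha>\<^sup>2 * \<bar>det (cols x y)\<bar>"
    "f x \<bullet> f x = \<alpha>\<^sup>2 * (x \<bullet> x)" "f x \<bullet> f y = \<alpha>\<^sup>2 * (x \<bullet> y)"
proof -
  show ii: "f x \<bullet> f x = \<alpha>\<^sup>2 * (x \<bullet> x)" "f x \<bullet> f y = \<alpha>\<^sup>2 * (x \<bullet> y)"
    unfolding f_def using sim_inner[OF A] by auto
  have iii: "f y \<bullet> f y = \<alpha>\<^sup>2 * (y \<bullet> y)" unfolding f_def using sim_inner[OF A] by auto
  show dd: "\<bar>det (cols (f x) (f y))\<bar> = \<alpha>\<^sup>2 * \<bar>det (cols x y)\<bar>"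
    by (rule det_from_gram) (use ii iii in auto)
  have a2: "\<alpha>\<^sup>2 > 0" using a by simp
  show "gb (f x) (f y)"
    using g dd ii iii a2 unfolding gb_def
    by (auto simp: abs_mult mult_left_mono)
qed

lemma orth_exists:
  assumes d: "det (cols u v) \<noteq> 0" and e: "u \<bullet> u = x \<bullet> x" "u \<bullet> v = x \<bullet> y" "v \<bullet> v = y \<bullet> y"
  shows "\<exists>A. orthogonal_matrix A \<and> (\<forall>z. A *v (cols u v *v z) = cols x y *v z)"
proof -
  define C where "C = cols u v"
  define X where "X = cols x y"
  have "invertible C" using d invertible_det_nz by (auto simp: C_def)
  then obtain Ci where Ci: "C ** Ci = mat 1" "Ci ** C = mat 1" unfolding invertible_def by blast
  define A where "A = X ** Ci"
  have gram: "transpose C ** C = transpose X ** X"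
    using e by (simp add: C_def X_def vec_eq_iff forall_2 matrix_matrix_mult_def transpose_def sum_2
        inner2 inner_commute mult.commute)
  have "transpose A ** A = transpose Ci ** (transpose X ** X) ** Ci"
    by (simp add: A_def matrix_transpose_mul matrix_mul_assoc)
  also have "\<dots> = transpose (C ** Ci) ** (C ** Ci)"
    by (simp add: gram[symmetric] matrix_transpose_mul matrix_mul_assoc)
  also have "\<dots> = mat 1" using Ci by simp
  finally have "orthogonal_matrix A" by (simp add: orthogonal_matrix)
  moreover have "A *v (C *v z) = X *v z" for z
    by (simp add: A_def matrix_vector_mul_assoc matrix_mul_assoc[symmetric] Ci)
  ultimately show ?thesis by (auto simp: C_def X_def)
qed

lemma sim_exists_core:
  assumes gx: "gb x y" and gu: "gb u v" and eq: "(x \<bullet> y) / (x \<bullet> x) = (u \<bullet> v) / (u \<bullet> u)"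
  shows "\<exists>A. orthogonal_matrix A \<and> lattice_of (cols x y) =
            (\<lambda>z. sqrt (x \<bullet> x / (u \<bullet> u)) *\<^sub>R (A *v z)) ` lattice_of (cols u v)"
proof -
  have dx: "det (cols x y) \<noteq> 0" and yy: "y \<bullet> y = x \<bullet> x" using gx by (auto simp: gb_def)
  have du: "det (cols u v) \<noteq> 0" and vv: "v \<bullet> v = u \<bullet> u" using gu by (auto simp: gb_def)
  have Nx: "x \<bullet> x > 0" using gb_nonzero[OF dx] by simp
  have Nu: "u \<bullet> u > 0" using gb_nonzero[OF du] by simp
  define \<alpha> where "\<alpha> = sqrt (x \<bullet> x / (u \<bullet> u))"
  have apos: "\<alpha> > 0" using Nx Nu by (simp add: \<alpha>_def)
  have a2: "\<alpha>\<^sup>2 = x \<bullet> x / (u \<bullet> u)" using Nx Nu by (simp add: \<alpha>_def)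
  define x' where "x' = (1/\<alpha>) *\<^sub>R x"
  define y' where "y' = (1/\<alpha>) *\<^sub>R y"
  have e1: "u \<bullet> u = x' \<bullet> x'" using a2 apos Nx Nu by (simp add: x'_def power2_eq_square field_simps)
  have e2: "u \<bullet> v = x' \<bullet> y'"
  proof -
    have "x' \<bullet> y' = (x \<bullet> y) / \<alpha>\<^sup>2" by (simp add: x'_def y'_def power2_eq_square)
    also have "\<dots> = (x \<bullet> y) / (x \<bullet> x) * (u \<bullet> u)" unfolding a2 using Nx Nu by (simp add: field_simps)
    also have "\<dots> = u \<bullet> v" using eq Nu by (simp add: field_simps)
    finally show ?thesis by simp
  qed
  have e3: "v \<bullet> v = y' \<bullet> y'" using a2 apos Nx Nu yy vv by (simp add: y'_def power2_eq_square field_simps)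
  obtain A where A: "orthogonal_matrix A" "\<And>z. A *v (cols u v *v z) = cols x' y' *v z"
    using orth_exists[OF du e1 e2 e3] by blast
  have "\<alpha> *\<^sub>R (A *v (cols u v *v z)) = cols x y *v z" for z
    using A(2)[of z] apos by (simp add: cols_mulv x'_def y'_def scaleR_add_right)
  hence "(\<lambda>z. \<alpha> *\<^sub>R (A *v z)) ` lattice_of (cols u v) = lattice_of (cols x y)"
    unfolding lattice_of_def image_image by simp
  thus ?thesis using A(1) unfolding \<alpha>_def by metis
qed

lemma sim_exists:
  assumes gx: "gb x y" and gu: "gb u v" and eq: "\<bar>x \<bullet> y\<bar> / (x \<bullet> x) = \<bar>u \<bullet> v\<bar> / (u \<bullet> u)"
  shows "\<exists>A. orthogonal_matrix A \<and> lattice_of (cols x y) =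
            (\<lambda>z. sqrt (x \<bullet> x / (u \<bullet> u)) *\<^sub>R (A *v z)) ` lattice_of (cols u v)"
proof -
  define v0 where "v0 = (if (x \<bullet> y) * (u \<bullet> v) \<ge> 0 then v else -v)"
  have g0: "gb u v0" using gu gb_neg by (simp add: v0_def)
  have L0: "lattice_of (cols u v0) = lattice_of (cols u v)" by (simp add: v0_def lattice_neg)
  have eq0: "(x \<bullet> y) / (x \<bullet> x) = (u \<bullet> v0) / (u \<bullet> u)"
  proof -
    have dx: "det (cols x y) \<noteq> 0" using gx by (auto simp: gb_def)
    have du: "det (cols u v) \<noteq> 0" using gu by (auto simp: gb_def)
    have Nx: "x \<bullet> x > 0" using gb_nonzero[OF dx] by simp
    have Nu: "u \<bullet> u > 0" using gb_nonzero[OF du] by simp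
    define a where "a = (x \<bullet> y) / (x \<bullet> x)"
    define b where "b = (u \<bullet> v) / (u \<bullet> u)"
    have ab: "\<bar>a\<bar> = \<bar>b\<bar>" using eq Nx Nu by (simp add: a_def b_def abs_divide)
    have sg: "a * b = ((x \<bullet> y) * (u \<bullet> v)) / ((x \<bullet> x) * (u \<bullet> u))" by (simp add: a_def b_def)
    have pd: "(x \<bullet> x) * (u \<bullet> u) > 0" using Nx Nu by simp
    have pm: "\<bar>p\<bar> = \<bar>q\<bar> \<Longrightarrow> p = q \<or> p = -q" for p q :: real
      by (auto simp: abs_if split: if_splits)
    have key: "\<bar>p\<bar> = \<bar>q\<bar> \<Longrightarrow> p * q \<ge> 0 \<Longrightarrow> p = q" for p q :: real
    proof -
      assume a: "\<bar>p\<bar> = \<bar>q\<bar>" "p * q \<ge> 0"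
      show "p = q"
      proof (cases "p = q")
        case False
        hence "p = -q" using pm[OF a(1)] by blast
        hence "q * q \<le> 0" using a(2) by simp
        moreover have "0 \<le> q * q" by simp
        ultimately have "q * q = 0" by linarith
        hence "q = 0" by simp
        thus ?thesis using \<open>p = -q\<close> by simp
      qed
    qed
    have key2: "\<bar>p\<bar> = \<bar>q\<bar> \<Longrightarrow> p * q < 0 \<Longrightarrow> p = -q" for p q :: real
    proof -
      assume a: "\<bar>p\<bar> = \<bar>q\<bar>" "p * q < 0"
      show "p = -q"
      proof (cases "p = -q")
        case False
        hence "p = q" using pm[OF a(1)] by blast
        hence "q * q < 0" using a(2) by simp
        thus ?thesis using not_square_less_zero[of q] by blast
      qed
    qed
    show ?thesis
    proof (cases "(x \<bullet> y) * (u \<bullet> v) \<ge> 0")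
      case True
      hence "a * b \<ge> 0" using sg pd by simp
      thus ?thesis using key[OF ab] True by (simp add: v0_def a_def b_def)
    next
      case False
      hence "a * b < 0" using sg pd by (simp add: divide_less_0_iff)
      thus ?thesis using key2[OF ab] False by (simp add: v0_def a_def b_def)
    qed
  qed
  show ?thesis using sim_exists_core[OF gx g0 eq0] L0 by simp
qed

lemma NT_R:
  fixes p q :: int
  assumes pq: "coprime p q" "0 < p" "p \<le> q" "q \<le> 3*p" "3 dvd q"
  shows "\<exists>m n. coprime m n \<and> 0 < n \<and> n \<le> m \<and> m \<le> 2*n \<and> \<not> 3 dvd (m+n)
     \<and> \<bar>n^2 + 2*m*n - 2*m^2\<bar> * (q^2 + 3*p^2) = 2 * \<bar>q^2 - 3*p^2\<bar> * (n^2 - m*n + m^2)"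
proof -
  define m1 where "m1 = 3*p + q"
  define n1 where "n1 = 2*q"
  define d where "d = gcd m1 n1"
  have n1pos: "n1 > 0" using pq by (simp add: n1_def)
  have dpos: "d > 0" using n1pos by (simp add: d_def)
  define m where "m = m1 div d"
  define n where "n = n1 div d"
  have m1e: "m1 = m * d" unfolding m_def d_def by (metis dvd_div_mult_self gcd_dvd1)
  have n1e: "n1 = n * d" unfolding n_def d_def by (metis dvd_div_mult_self gcd_dvd2)
  have cop: "coprime m n" unfolding m_def n_def d_def
    by (rule div_gcd_coprime) (use n1pos in simp)
  have npos: "n > 0" using n1pos dpos n1e by (simp add: zero_less_mult_iff)
  have "n * d \<le> m * d" using pq by (simp add: m1e[symmetric] n1e[symmetric] m1_def n1_def)
  hence nm: "n \<le> m" using dpos by simp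
  have "m * d \<le> (2*n) * d" using pq by (simp add: m1e[symmetric] n1e[symmetric, unfolded mult.assoc] m1_def n1_def mult.assoc)
  hence m2n: "m \<le> 2*n" using dpos by simp
  have "3 dvd d" unfolding d_def using pq(5) by (simp add: m1_def n1_def)
  then obtain d' where dd: "d = 3 * d'" by blast
  have "3 * (p + q) = 3 * (d' * (m + n))" using m1e n1e dd by (simp add: m1_def n1_def algebra_simps)
  hence pqd: "p + q = d' * (m + n)" by simp
  have n3: "\<not> 3 dvd (m + n)"
  proof
    assume "3 dvd (m + n)"
    hence "3 dvd (p + q)" using pqd by simp
    hence "3 dvd p" using pq(5) by (metis dvd_add_left_iff)
    hence "is_unit (3::int)" using pq(1) pq(5) by (meson coprime_common_divisor)
    thus False by simp
  qed
  have e1: "n1^2 + 2*m1*n1 - 2*m1^2 = d^2 * (n^2 + 2*m*n - 2*m^2)"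
    by (simp add: m1e n1e power2_eq_square algebra_simps)
  have e2: "n1^2 - m1*n1 + m1^2 = d^2 * (n^2 - m*n + m^2)"
    by (simp add: m1e n1e power2_eq_square algebra_simps)
  have e3: "n1^2 + 2*m1*n1 - 2*m1^2 = 6 * (q^2 - 3*p^2)"
    by (simp add: m1_def n1_def power2_eq_square algebra_simps)
  have e4: "n1^2 - m1*n1 + m1^2 = 3 * (q^2 + 3*p^2)"
    by (simp add: m1_def n1_def power2_eq_square algebra_simps)
  have "d^2 * (\<bar>n^2 + 2*m*n - 2*m^2\<bar> * (q^2 + 3*p^2) * 3) = d^2 * (2 * \<bar>q^2 - 3*p^2\<bar> * (n^2 - m*n + m^2) * 3)"
  proof -
    have "d^2 * (\<bar>n^2 + 2*m*n - 2*m^2\<bar> * (q^2 + 3*p^2) * 3) = \<bar>d^2 * (n^2 + 2*m*n - 2*m^2)\<bar> * (3*(q^2 + 3*p^2))"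
      by (simp add: abs_mult)
    also have "\<dots> = \<bar>n1^2 + 2*m1*n1 - 2*m1^2\<bar> * (n1^2 - m1*n1 + m1^2)" by (simp only: e1 e4)
    also have "\<dots> = \<bar>6 * (q^2 - 3*p^2)\<bar> * (d^2 * (n^2 - m*n + m^2))" by (simp only: e3 e2)
    also have "\<dots> = 6 * \<bar>q^2 - 3*p^2\<bar> * (d^2 * (n^2 - m*n + m^2))" by (subst abs_mult) simp
    also have "\<dots> = d^2 * (2 * \<bar>q^2 - 3*p^2\<bar> * (n^2 - m*n + m^2) * 3)" by (simp add: algebra_simps)
    finally show ?thesis .
  qed
  hence "\<bar>n^2 + 2*m*n - 2*m^2\<bar> * (q^2 + 3*p^2) = 2 * \<bar>q^2 - 3*p^2\<bar> * (n^2 - m*n + m^2)"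
    using dpos by (simp add: ac_simps)
  thus ?thesis using cop npos nm m2n n3 by blast
qed

lemma NT1:
  fixes X Y Z :: int
  assumes X0: "X \<ge> 0" and Y0: "Y > 0" and eq: "X^2 + 3*Y^2 = Z^2" and XZ: "2*X \<le> Z"
  shows "\<exists>m n. coprime m n \<and> 0 < n \<and> n \<le> m \<and> m \<le> 2*n \<and> \<not> 3 dvd (m+n)
     \<and> \<bar>n^2 + 2*m*n - 2*m^2\<bar> * Z = X * (2 * (n^2 - m*n + m^2))"
proof -
  have "3*Y^2 > 0" using Y0 by simp
  moreover have "X^2 \<ge> 0" by simp
  ultimately have "Z^2 > 0" using eq by linarith
  hence "Z \<noteq> 0" by auto
  moreover have "Z \<ge> 0" using X0 XZ by linarith
  ultimately have Zpos: "Z > 0" by simp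
  define a where "a = Y"
  define b where "b = Z + X"
  have bpos: "b > 0" using Zpos X0 by (simp add: b_def)
  have ZX: "Z^2 - X^2 = 3*Y^2" using eq by simp
  have r1: "b \<le> 3*a"
  proof -
    have "(Z+X)*(2*Z - 4*X) \<ge> 0" using Zpos X0 XZ by simp
    hence "(Z+X)^2 \<le> 9*Y^2" using ZX by (simp add: power2_eq_square algebra_simps)
    hence "(Z+X)^2 \<le> (3*Y)^2" by (simp add: power_mult_distrib)
    hence "Z+X \<le> 3*Y" by (rule power2_le_imp_le) (use Y0 in simp)
    thus ?thesis unfolding a_def b_def .
  qed
  have r2: "a \<le> b"
  proof -
    have "Y^2 \<le> 3*Y^2" by simp
    also have "\<dots> \<le> Z^2" using eq zero_le_power2[of X] by linarith
    also have "Z^2 \<le> (Z+X)^2" using X0 Zpos by (simp add: power2_eq_square algebra_simps)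
    finally have "Y^2 \<le> (Z+X)^2" .
    hence "Y \<le> Z+X" by (rule power2_le_imp_le) (use bpos b_def in simp)
    thus ?thesis unfolding a_def b_def .
  qed
  have idn: "\<bar>b^2 - 3*a^2\<bar> * Z = X * (b^2 + 3*a^2)"
  proof -
    have "b^2 - 3*a^2 = 2*X*(Z+X)" using ZX by (simp add: a_def b_def power2_eq_square algebra_simps)
    moreover have "b^2 + 3*a^2 = 2*Z*(Z+X)" using ZX by (simp add: a_def b_def power2_eq_square algebra_simps)
    ultimately show ?thesis using X0 Zpos by (simp add: abs_mult)
  qed
  define g where "g = gcd a b"
  have gpos: "g > 0" using bpos by (simp add: g_def)
  define p where "p = a div g"
  define q where "q = b div g"
  have ae: "a = p * g" unfolding p_def g_def by (metis dvd_div_mult_self gcd_dvd1)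
  have be: "b = q * g" unfolding q_def g_def by (metis dvd_div_mult_self gcd_dvd2)
  have cop: "coprime p q" unfolding p_def q_def g_def by (rule div_gcd_coprime) (use bpos in simp)
  have "0 < p * g" using ae Y0 a_def by simp
  hence ppos: "p > 0" using gpos by (simp add: zero_less_mult_iff)
  have "p * g \<le> q * g" using r2 ae be by simp
  hence pq1: "p \<le> q" using gpos by (rule mult_right_le_imp_le)
  have "q * g \<le> (3*p) * g" using r1 ae be by (simp add: mult.assoc)
  hence pq2: "q \<le> 3*p" using gpos by (rule mult_right_le_imp_le)
  have idq: "\<bar>q^2 - 3*p^2\<bar> * Z = X * (q^2 + 3*p^2)"
  proof -
    have "g^2 * (\<bar>q^2 - 3*p^2\<bar> * Z) = g^2 * (X * (q^2 + 3*p^2))"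
    proof -
      have "b^2 - 3*a^2 = g^2 * (q^2 - 3*p^2)" by (simp add: ae be power2_eq_square algebra_simps)
      hence "\<bar>b^2 - 3*a^2\<bar> = g^2 * \<bar>q^2 - 3*p^2\<bar>" by (simp add: abs_mult)
      hence "g^2 * (\<bar>q^2 - 3*p^2\<bar> * Z) = \<bar>b^2 - 3*a^2\<bar> * Z" by simp
      also have "\<dots> = X * (b^2 + 3*a^2)" by (rule idn)
      also have "\<dots> = g^2 * (X * (q^2 + 3*p^2))" by (simp add: ae be power2_eq_square algebra_simps)
      finally show ?thesis .
    qed
    thus ?thesis using gpos by simp
  qed
  have Spos: "q^2 + 3*p^2 > 0" using ppos by (simp add: add_nonneg_pos)
  show ?thesis
  proof (cases "3 dvd q")
    case True
    obtain m n where mn: "coprime m n" "0 < n" "n \<le> m" "m \<le> 2*n" "\<not> 3 dvd (m+n)"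
      and id: "\<bar>n^2 + 2*m*n - 2*m^2\<bar> * (q^2 + 3*p^2) = 2 * \<bar>q^2 - 3*p^2\<bar> * (n^2 - m*n + m^2)"
      using NT_R[OF cop ppos pq1 pq2 True] by blast
    have "(\<bar>n^2 + 2*m*n - 2*m^2\<bar> * Z) * (q^2 + 3*p^2) = (X * (2 * (n^2 - m*n + m^2))) * (q^2 + 3*p^2)"
    proof -
      have "(\<bar>n^2 + 2*m*n - 2*m^2\<bar> * Z) * (q^2 + 3*p^2) = (\<bar>n^2 + 2*m*n - 2*m^2\<bar> * (q^2 + 3*p^2)) * Z"
        by (simp add: algebra_simps)
      also have "\<dots> = (2 * \<bar>q^2 - 3*p^2\<bar> * (n^2 - m*n + m^2)) * Z" by (simp only: id)
      also have "\<dots> = 2 * (n^2 - m*n + m^2) * (\<bar>q^2 - 3*p^2\<bar> * Z)" by (simp add: algebra_simps)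
      also have "\<dots> = 2 * (n^2 - m*n + m^2) * (X * (q^2 + 3*p^2))" by (simp only: idq)
      also have "\<dots> = (X * (2 * (n^2 - m*n + m^2))) * (q^2 + 3*p^2)" by (simp add: algebra_simps)
      finally show ?thesis .
    qed
    hence "\<bar>n^2 + 2*m*n - 2*m^2\<bar> * Z = X * (2 * (n^2 - m*n + m^2))" using Spos by simp
    thus ?thesis using mn by blast
  next
    case False
    have "q mod 3 = 1 \<or> q mod 3 = 2" using False by presburger
    moreover have c2: "coprime (2::int) 3" using coprime_add_one_right[of "2::int"] by simp
    ultimately have "coprime (q mod 3) 3" by (metis coprime_1_left)
    hence "coprime q 3" by (simp add: coprime_mod_left_iff)
    hence cop': "coprime q (3*p)" using cop by (simp add: coprime_commute)
    have "0 < q" using ppos pq1 by simp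
    obtain m n where mn: "coprime m n" "0 < n" "n \<le> m" "m \<le> 2*n" "\<not> 3 dvd (m+n)"
      and id: "\<bar>n^2 + 2*m*n - 2*m^2\<bar> * ((3*p)^2 + 3*q^2) = 2 * \<bar>(3*p)^2 - 3*q^2\<bar> * (n^2 - m*n + m^2)"
      using NT_R[OF cop' \<open>0 < q\<close>] pq1 pq2 by force
    have id2: "\<bar>n^2 + 2*m*n - 2*m^2\<bar> * (q^2 + 3*p^2) = 2 * \<bar>q^2 - 3*p^2\<bar> * (n^2 - m*n + m^2)"
    proof -
      have "3 * (\<bar>n^2 + 2*m*n - 2*m^2\<bar> * (q^2 + 3*p^2)) = 3 * (2 * \<bar>q^2 - 3*p^2\<bar> * (n^2 - m*n + m^2))"
      proof -
        have a1: "(3*p)^2 + 3*q^2 = 3 * (q^2 + 3*p^2)" by (simp add: power2_eq_square algebra_simps)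
        have "(3*p)^2 - 3*q^2 = - (3 * (q^2 - 3*p^2))" by (simp add: power2_eq_square algebra_simps)
        hence a2: "\<bar>(3*p)^2 - 3*q^2\<bar> = 3 * \<bar>q^2 - 3*p^2\<bar>" by (simp only: abs_minus_cancel abs_mult)
        show ?thesis using id unfolding a1 a2 by (simp add: algebra_simps)
      qed
      thus ?thesis by (simp add: ac_simps)
    qed
    have "(\<bar>n^2 + 2*m*n - 2*m^2\<bar> * Z) * (q^2 + 3*p^2) = (X * (2 * (n^2 - m*n + m^2))) * (q^2 + 3*p^2)"
    proof -
      have "(\<bar>n^2 + 2*m*n - 2*m^2\<bar> * Z) * (q^2 + 3*p^2) = (\<bar>n^2 + 2*m*n - 2*m^2\<bar> * (q^2 + 3*p^2)) * Z"
        by (simp add: algebra_simps)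
      also have "\<dots> = (2 * \<bar>q^2 - 3*p^2\<bar> * (n^2 - m*n + m^2)) * Z" by (simp only: id2)
      also have "\<dots> = 2 * (n^2 - m*n + m^2) * (\<bar>q^2 - 3*p^2\<bar> * Z)" by (simp add: algebra_simps)
      also have "\<dots> = 2 * (n^2 - m*n + m^2) * (X * (q^2 + 3*p^2))" by (simp only: idq)
      also have "\<dots> = (X * (2 * (n^2 - m*n + m^2))) * (q^2 + 3*p^2)" by (simp add: algebra_simps)
      finally show ?thesis .
    qed
    hence "\<bar>n^2 + 2*m*n - 2*m^2\<bar> * Z = X * (2 * (n^2 - m*n + m^2))" using Spos by simp
    thus ?thesis using mn by blast
  qed
qed

lemma cop_addmul: "coprime (a + c*b) b \<longleftrightarrow> coprime a (b::int)"
proof (cases "b = 0")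
  case True thus ?thesis by simp
next
  case False
  have "coprime (a + c*b) b \<longleftrightarrow> coprime ((a + c*b) mod b) b" using False by (metis coprime_mod_left_iff)
  also have "\<dots> \<longleftrightarrow> coprime (a mod b) b" by simp
  also have "\<dots> \<longleftrightarrow> coprime a b" using False by (metis coprime_mod_left_iff)
  finally show ?thesis .
qed

lemma cop3: assumes "\<not> 3 dvd (u::int)" shows "coprime u 3"
proof -
  have "u mod 3 = 1 \<or> u mod 3 = 2" using assms by presburger
  moreover have c2: "coprime (2::int) 3" using coprime_add_one_right[of "2::int"] by simp
  ultimately have "coprime (u mod 3) 3" by (metis coprime_1_left)
  thus ?thesis by simp
qed

lemma NT2:
  fixes m n :: int
  assumes cop: "coprime m n" and n3: "\<not> 3 dvd (m+n)"
  shows "coprime (n^2 - m*n + m^2) ((2*m - n)*n)"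
proof -
  have "n^2 - m*n + m^2 = m^2 + (n - m)*n" by (simp add: power2_eq_square algebra_simps)
  moreover have "coprime (m^2 + (n - m)*n) n" unfolding cop_addmul using cop by simp
  ultimately have c1: "coprime (n^2 - m*n + m^2) n" by metis
  define u where "u = 2*m - n"
  have "n^2 - m*n + m^2 = 3*m^2 + (u - 3*m)*u" by (simp add: u_def power2_eq_square algebra_simps)
  moreover have "coprime (3*m^2 + (u - 3*m)*u) u"
  proof -
    have "\<not> 3 dvd u"
    proof
      assume "3 dvd u"
      moreover have "m + n = 3*m - u" by (simp add: u_def)
      ultimately have "3 dvd (m+n)" by simp
      thus False using n3 by simp
    qed
    hence "coprime 3 u" using cop3 coprime_commute by blast
    moreover have "coprime m u"
    proof -
      have "u = -n + 2*m" by (simp add: u_def)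
      hence "coprime u m \<longleftrightarrow> coprime (-n) m" using cop_addmul[of "-n" 2 m] by simp
      thus ?thesis using cop by (simp add: coprime_commute)
    qed
    ultimately show ?thesis unfolding cop_addmul by simp
  qed
  ultimately have c2: "coprime (n^2 - m*n + m^2) (2*m - n)" unfolding u_def by metis
  show ?thesis using c1 c2 by simp
qed

definition hv :: "int \<Rightarrow> int \<Rightarrow> real^2" where
  "hv a b = vector [of_int a - of_int b / 2, of_int b * sqrt 3 / 2]"

lemma hv_nth[simp]: "hv a b $ 1 = of_int a - of_int b / 2" "hv a b $ 2 = of_int b * sqrt 3 / 2"
  by (simp_all add: hv_def)

lemma s3: "sqrt 3 * sqrt 3 = (3::real)" by simp

lemma hv_inner: "hv a b \<bullet> hv c e = of_int (2*a*c + 2*b*e - a*e - b*c) / 2"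
proof -
  have "hv a b \<bullet> hv c e = (of_int a - of_int b/2)*(of_int c - of_int e/2) + (of_int b * of_int e) * (sqrt 3 * sqrt 3) / 4"
    by (simp add: inner2 field_simps)
  also have "\<dots> = of_int (2*a*c + 2*b*e - a*e - b*c) / 2" unfolding s3 by (simp add: field_simps)
  finally show ?thesis .
qed

lemma hv_norm: "hv a b \<bullet> hv a b = of_int (a^2 - a*b + b^2)"
  unfolding hv_inner by (simp add: power2_eq_square field_simps)

lemma det_hv: "det (cols (hv a b) (hv c e)) = sqrt 3 / 2 * of_int (a*e - b*c)"
  unfolding det_cols by (simp add: field_simps)

lemma hv_comb: "of_int i *\<^sub>R hv a b + of_int j *\<^sub>R hv c e = hv (i*a + j*c) (i*b + j*e)"
  by (simp add: vec2_eq field_simps)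

lemma hex_cols: "hex_matrix = cols (hv 1 0) (hv 0 1)"
  by (simp add: hex_matrix_def cols_def vec_eq_iff forall_2)

lemma mem_Lambda: "z \<in> Lambda_h \<longleftrightarrow> (\<exists>a b. z = hv a b)"
proof -
  have "z \<in> Lambda_h \<longleftrightarrow> (\<exists>i j. z = of_int i *\<^sub>R hv 1 0 + of_int j *\<^sub>R hv 0 1)"
    unfolding Lambda_h_def hex_cols mem_lat ..
  also have "\<dots> \<longleftrightarrow> (\<exists>a b. z = hv a b)" by (simp add: hv_comb)
  finally show ?thesis .
qed

lemma sub_Lambda:
  assumes "x \<in> Lambda_h" "y \<in> Lambda_h"
  shows "lattice_of (cols x y) \<subseteq> Lambda_h"
proof
  fix z assume "z \<in> lattice_of (cols x y)"
  then obtain i j where z: "z = of_int i *\<^sub>R x + of_int j *\<^sub>R y" unfolding mem_lat by blast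
  obtain a b c e where "x = hv a b" "y = hv c e" using assms unfolding mem_Lambda by blast
  hence "z = hv (i*a + j*c) (i*b + j*e)" using z hv_comb by simp
  thus "z \<in> Lambda_h" unfolding mem_Lambda by blast
qed

lemma det_hex: "det (cols (hv 1 0) (hv 0 1)) = sqrt 3 / 2"
  unfolding det_hv by simp

lemma lat_det_Lambda: "lat_det Lambda_h = sqrt 3 / 2"
  unfolding Lambda_h_def hex_cols using lat_det_cols[of "hv 1 0" "hv 0 1"] det_hex by simp

lemma Gamma_cols: "Gamma_mat m n = cols (hv m (m-n)) (hv (m-n) m)"
  by (simp add: Gamma_mat_def cols_def vec_eq_iff forall_2 field_simps)

lemma Gamma_theta_cols: "Gamma_theta m n = lattice_of (cols (hv m (m-n)) (hv (m-n) m))"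
  by (simp add: Gamma_theta_def Gamma_cols)

lemma v_data:
  "hv m (m-n) \<bullet> hv m (m-n) = of_int (n^2 - m*n + m^2)"
  "hv (m-n) m \<bullet> hv (m-n) m = of_int (n^2 - m*n + m^2)"
  "hv m (m-n) \<bullet> hv (m-n) m = - of_int (n^2 + 2*m*n - 2*m^2) / 2"
  "det (cols (hv m (m-n)) (hv (m-n) m)) = sqrt 3 / 2 * of_int ((2*m - n)*n)"
  by (simp_all add: hv_norm hv_inner det_hv power2_eq_square algebra_simps)

lemma hexp_sign:
  fixes m n :: int
  assumes "1 \<le> real_of_int m / real_of_int n" "real_of_int m / real_of_int n \<le> 2"
  shows "(0 < n \<and> n \<le> m \<and> m \<le> 2*n) \<or> (n < 0 \<and> m \<le> n \<and> 2*n \<le> m)"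
proof -
  have "n \<noteq> 0" using assms by auto
  show ?thesis
  proof (cases "n > 0")
    case True
    hence r: "real_of_int n > 0" by simp
    have "real_of_int n \<le> real_of_int m" "real_of_int m \<le> 2 * real_of_int n"
      using assms r by (simp_all add: field_simps)
    thus ?thesis using True by linarith
  next
    case False
    hence n0: "n < 0" using \<open>n \<noteq> 0\<close> by simp
    hence r: "real_of_int n < 0" by simp
    have "real_of_int m \<le> real_of_int n" "2 * real_of_int n \<le> real_of_int m"
      using assms r by (simp_all add: field_simps)
    thus ?thesis using n0 by linarith
  qed
qed

lemma hex_pos_facts:
  fixes m n :: int
  assumes "0 < n" "n \<le> m" "m \<le> 2*n"
  shows "(2*m - n)*n > 0" "\<bar>n^2 + 2*m*n - 2*m^2\<bar> \<le> n^2 - m*n + m^2" "n^2 - m*n + m^2 > 0"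
proof -
  show "(2*m - n)*n > 0" using assms by (simp add: mult_pos_pos)
  have a: "0 \<le> m * (m - n)" using assms by (simp add: mult_nonneg_nonneg)
  have b: "0 \<le> (2*n - m) * (n + m)" using assms by (simp add: mult_nonneg_nonneg)
  have "n^2 - m*n + m^2 - (n^2 + 2*m*n - 2*m^2) = 3 * (m * (m - n))"
    by (simp add: power2_eq_square algebra_simps)
  moreover have "n^2 - m*n + m^2 + (n^2 + 2*m*n - 2*m^2) = (2*n - m) * (n + m)"
    by (simp add: power2_eq_square algebra_simps)
  ultimately show "\<bar>n^2 + 2*m*n - 2*m^2\<bar> \<le> n^2 - m*n + m^2" using a b by linarith
  have eqn: "n^2 - m*n + m^2 = n^2 + m * (m - n)" by (simp add: power2_eq_square algebra_simps)
  have "0 < n^2" using assms by simp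
  thus "n^2 - m*n + m^2 > 0" using a eqn by linarith
qed

lemma hex_facts:
  fixes m n :: int
  assumes "1 \<le> real_of_int m / real_of_int n" "real_of_int m / real_of_int n \<le> 2"
  shows "(2*m - n)*n > 0" "\<bar>n^2 + 2*m*n - 2*m^2\<bar> \<le> n^2 - m*n + m^2" "n^2 - m*n + m^2 > 0"
proof -
  have e: "(2*(-m) - (-n))*(-n) = (2*m - n)*n"
     "(-n)^2 + 2*(-m)*(-n) - 2*(-m)^2 = n^2 + 2*m*n - 2*m^2"
     "(-n)^2 - (-m)*(-n) + (-m)^2 = n^2 - m*n + m^2"
    by (simp_all add: power2_eq_square algebra_simps)
  have "(2*m - n)*n > 0 \<and> \<bar>n^2 + 2*m*n - 2*m^2\<bar> \<le> n^2 - m*n + m^2 \<and> n^2 - m*n + m^2 > 0"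
    using hexp_sign[OF assms]
  proof (elim disjE conjE)
    assume h: "0 < n" "n \<le> m" "m \<le> 2*n"
    show ?thesis using hex_pos_facts[OF h] by blast
  next
    assume "n < 0" "m \<le> n" "2*n \<le> m"
    hence h: "0 < -n" "-n \<le> -m" "-m \<le> 2*(-n)" by auto
    show ?thesis using hex_pos_facts[OF h] e by simp
  qed
  thus "(2*m - n)*n > 0" "\<bar>n^2 + 2*m*n - 2*m^2\<bar> \<le> n^2 - m*n + m^2" "n^2 - m*n + m^2 > 0"
    by auto
qed

lemma Gamma_gb:
  assumes "hex_param t m n"
  shows "gb (hv m (m-n)) (hv (m-n) m)"
proof -
  have r: "1 \<le> real_of_int m / real_of_int n" "real_of_int m / real_of_int n \<le> 2"
    using assms by (auto simp: hex_param_def)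
  note f = hex_facts[OF r]
  define X0 where "X0 = n^2 + 2*m*n - 2*m^2"
  define N0 where "N0 = n^2 - m*n + m^2"
  define D0 where "D0 = (2*m - n)*n"
  have "real_of_int \<bar>X0\<bar> \<le> real_of_int N0" using f(2) unfolding X0_def N0_def by linarith
  hence x: "\<bar>real_of_int X0\<bar> \<le> real_of_int N0" by simp
  have "D0 \<noteq> 0" using f(1) unfolding D0_def by linarith
  hence d: "real_of_int D0 \<noteq> 0" by simp
  show ?thesis unfolding gb_def v_data X0_def[symmetric] N0_def[symmetric] D0_def[symmetric]
    using x d by (simp add: abs_divide)
qed

lemma Gamma_cos:
  assumes "hex_param t m n"
  shows "cos (lattice_angle (Gamma_theta m n)) = cos t"
proof -
  have r: "1 \<le> real_of_int m / real_of_int n" "real_of_int m / real_of_int n \<le> 2"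
    using assms by (auto simp: hex_param_def)
  note f = hex_facts[OF r]
  define X0 where "X0 = n^2 + 2*m*n - 2*m^2"
  define N0 where "N0 = n^2 - m*n + m^2"
  have c: "cos t = 1/2 * (\<bar>real_of_int X0\<bar> / real_of_int N0)"
    using assms unfolding hex_param_def X0_def N0_def by blast
  show ?thesis
    unfolding Gamma_theta_cols cos_lattice_angle[OF Gamma_gb[OF assms]] v_data X0_def[symmetric] N0_def[symmetric] c
    by (simp add: abs_divide)
qed

lemma Gamma_angle:
  assumes "hex_param t m n" "0 \<le> t" "t \<le> pi"
  shows "lattice_angle (Gamma_theta m n) = t"
proof -
  have g: "gb (hv m (m-n)) (hv (m-n) m)" by (rule Gamma_gb[OF assms(1)])
  have "pi/3 \<le> lattice_angle (Gamma_theta m n)" "lattice_angle (Gamma_theta m n) \<le> pi/2"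
    unfolding Gamma_theta_cols using lattice_angle_range[OF g] by auto
  thus ?thesis using cos_inj_pi[of "lattice_angle (Gamma_theta m n)" t] Gamma_cos[OF assms(1)] assms
    by auto
qed

lemma Gamma_WR:
  assumes "hex_param t m n"
  shows "Gamma_theta m n \<in> WR_hex"
proof -
  have g: "gb (hv m (m-n)) (hv (m-n) m)" by (rule Gamma_gb[OF assms(1)])
  have "Gamma_theta m n \<subseteq> Lambda_h" unfolding Gamma_theta_cols
    by (rule sub_Lambda) (auto simp: mem_Lambda)
  thus ?thesis unfolding WR_hex_def Gamma_theta_cols using gb_is_lattice[OF g] gb_wr[OF g] by auto
qed

lemma hex_gb_data:
  assumes g: "gb x y" and xL: "x \<in> Lambda_h" and yL: "y \<in> Lambda_h"
  obtains N P2 D :: int where "x \<bullet> x = of_int N" "x \<bullet> y = of_int P2 / 2"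
    "det (cols x y) = sqrt 3 / 2 * of_int D" "P2^2 + 3*D^2 = 4*N^2" "D \<noteq> 0" "N > 0" "\<bar>P2\<bar> \<le> N"
proof -
  obtain a b c e where x: "x = hv a b" and y: "y = hv c e" using xL yL unfolding mem_Lambda by blast
  define N where "N = a^2 - a*b + b^2"
  define P2 where "P2 = 2*a*c + 2*b*e - a*e - b*c"
  define D where "D = a*e - b*c"
  have h1: "x \<bullet> x = of_int N" unfolding x N_def by (rule hv_norm)
  have h2: "x \<bullet> y = of_int P2 / 2" unfolding x y P2_def by (rule hv_inner)
  have h3: "det (cols x y) = sqrt 3 / 2 * of_int D" unfolding x y D_def by (rule det_hv)
  have yy: "y \<bullet> y = x \<bullet> x" and d: "det (cols x y) \<noteq> 0" and hp: "2 * \<bar>x \<bullet> y\<bar> \<le> x \<bullet> x"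
    using g by (auto simp: gb_def)
  have "(det (cols x y))\<^sup>2 = (x \<bullet> x) * (y \<bullet> y) - (x \<bullet> y)\<^sup>2" by (rule lagrange2)
  hence "(sqrt 3 / 2 * of_int D)\<^sup>2 = of_int N * of_int N - (of_int P2 / 2)\<^sup>2"
    unfolding h3 yy h1 h2 .
  hence "3 / 4 * (of_int D)\<^sup>2 = of_int N * of_int N - (of_int P2)\<^sup>2 / (4::real)"
    by (simp add: power_mult_distrib power_divide)
  hence "real_of_int (P2^2 + 3*D^2) = real_of_int (4*N^2)"
    by (simp add: field_simps power2_eq_square)
  hence e: "P2^2 + 3*D^2 = 4*N^2" by (rule of_int_eq_iff[THEN iffD1])
  have "D \<noteq> 0" using d h3 by auto
  moreover have "N > 0"
  proof -
    have "x \<noteq> 0" using gb_nonzero[OF d] by simp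
    hence "x \<bullet> x > 0" by simp
    thus ?thesis using h1 by simp
  qed
  moreover have "\<bar>P2\<bar> \<le> N"
  proof -
    have "real_of_int \<bar>P2\<bar> \<le> real_of_int N" using hp h1 h2 by (simp add: abs_divide)
    thus ?thesis by (simp only: of_int_le_iff)
  qed
  ultimately show ?thesis using that h1 h2 h3 e by blast
qed

lemma P1_forward:
  assumes G: "G \<in> WR_hex"
  shows "\<exists>m n. hex_param (lattice_angle G) m n"
proof -
  have wr: "well_rounded G" and sub: "G \<subseteq> Lambda_h" using G by (auto simp: WR_hex_def)
  obtain x y where g: "gb x y" and GL: "G = lattice_of (cols x y)" using wr_gb[OF wr] by blast
  have xL: "x \<in> Lambda_h" "y \<in> Lambda_h" using sub gb_basis_in GL by auto
  obtain N P2 D where h1: "x \<bullet> x = of_int N" and h2: "x \<bullet> y = of_int P2 / 2"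
    and e: "P2^2 + 3*D^2 = 4*N^2" and D0: "D \<noteq> 0" and Npos: "N > 0" and PN: "\<bar>P2\<bar> \<le> N"
    using hex_gb_data[OF g xL] by metis
  have eq: "\<bar>P2\<bar>^2 + 3*\<bar>D\<bar>^2 = (2*N)^2" using e by (simp add: power_mult_distrib)
  obtain m n where mn: "coprime m n" "0 < n" "n \<le> m" "m \<le> 2*n" "\<not> 3 dvd (m+n)"
    and id: "\<bar>n^2 + 2*m*n - 2*m^2\<bar> * (2*N) = \<bar>P2\<bar> * (2 * (n^2 - m*n + m^2))"
    using NT1[of "\<bar>P2\<bar>" "\<bar>D\<bar>" "2*N"] eq PN D0 by auto
  define X0 where "X0 = n^2 + 2*m*n - 2*m^2"
  define N0 where "N0 = n^2 - m*n + m^2"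
  have N0pos: "N0 > 0" using hex_pos_facts(3)[OF mn(2-4)] by (simp add: N0_def)
  have id2: "\<bar>X0\<bar> * N = \<bar>P2\<bar> * N0" using id unfolding X0_def[symmetric] N0_def[symmetric] by simp
  have rn: "real_of_int n > 0" using mn by simp
  have r1: "1 \<le> real_of_int m / real_of_int n" using mn rn by (simp add: field_simps)
  have r2: "real_of_int m / real_of_int n \<le> 2" using mn rn by (simp add: field_simps)
  have c: "cos (lattice_angle G) = \<bar>x \<bullet> y\<bar> / (x \<bullet> x)" unfolding GL by (rule cos_lattice_angle[OF g])
  have "\<bar>x \<bullet> y\<bar> / (x \<bullet> x) = 1/2 * (\<bar>real_of_int X0\<bar> / real_of_int N0)"
  proof -
    have i: "\<bar>real_of_int X0\<bar> * real_of_int N = \<bar>real_of_int P2\<bar> * real_of_int N0"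
      using id2 by (metis of_int_abs of_int_mult)
    have "real_of_int N > 0" "real_of_int N0 > 0" using Npos N0pos by auto
    thus ?thesis unfolding h1 h2 using i by (simp add: abs_divide field_simps)
  qed
  hence "cos (lattice_angle G) = 1/2 * (\<bar>real_of_int (n^2 + 2*m*n - 2*m^2)\<bar> / real_of_int (n^2 - m*n + m^2))"
    using c unfolding X0_def N0_def by simp
  thus ?thesis unfolding hex_param_def using mn r1 r2 by blast
qed

lemma angle_sim:
  fixes A :: "real^2^2"
  assumes A: "orthogonal_matrix A" and a: "\<alpha> \<noteq> 0" and g: "gb x y"
  shows "lattice_angle (lattice_of (cols (\<alpha> *\<^sub>R (A *v x)) (\<alpha> *\<^sub>R (A *v y)))) = lattice_angle (lattice_of (cols x y))"
proof -
  note s = sim_gb[OF A a g]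
  have a2: "\<alpha>\<^sup>2 > 0" using a by simp
  have "\<bar>\<alpha>\<^sup>2 * (x \<bullet> y)\<bar> / (\<alpha>\<^sup>2 * (x \<bullet> x)) = \<bar>x \<bullet> y\<bar> / (x \<bullet> x)"
    using a2 by (simp add: abs_mult)
  thus ?thesis unfolding lattice_angle_gb[OF s(1)] lattice_angle_gb[OF g] s(3) s(4) by simp
qed

lemma Gamma_data:
  assumes "hex_param t m n"
  shows "gb (hv m (m-n)) (hv (m-n) m)" "Gamma_theta m n = lattice_of (cols (hv m (m-n)) (hv (m-n) m))"
    "(2*m - n)*n > 0" "n^2 - m*n + m^2 > 0"
    "coprime (n^2 - m*n + m^2) ((2*m - n)*n)"
proof -
  have r: "1 \<le> real_of_int m / real_of_int n" "real_of_int m / real_of_int n \<le> 2"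
    and c: "coprime m n" "\<not> 3 dvd (m+n)"
    using assms by (auto simp: hex_param_def)
  show "gb (hv m (m-n)) (hv (m-n) m)" by (rule Gamma_gb[OF assms])
  show "Gamma_theta m n = lattice_of (cols (hv m (m-n)) (hv (m-n) m))" by (rule Gamma_theta_cols)
  show "(2*m - n)*n > 0" "n^2 - m*n + m^2 > 0" using hex_facts[OF r] by auto
  show "coprime (n^2 - m*n + m^2) ((2*m - n)*n)" by (rule NT2[OF c])
qed

lemma K:
  assumes hp: "hex_param t m n" and G: "G \<in> WR_hex"
    and ang: "lattice_angle G = lattice_angle (Gamma_theta m n)"
  shows "\<exists>k::nat. k > 0 \<and> (\<exists>A. orthogonal_matrix A \<and> G = (\<lambda>x. sqrt (real k) *\<^sub>R (A *v x)) ` Gamma_theta m n)"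
proof -
  define v1 where "v1 = hv m (m-n)"
  define v2 where "v2 = hv (m-n) m"
  define X0 where "X0 = n^2 + 2*m*n - 2*m^2"
  define N0 where "N0 = n^2 - m*n + m^2"
  define D0 where "D0 = (2*m - n)*n"
  note gd = Gamma_data[OF hp, folded v1_def v2_def N0_def D0_def]
  have vd: "v1 \<bullet> v1 = of_int N0" "v1 \<bullet> v2 = - of_int X0 / 2"
    unfolding v1_def v2_def N0_def X0_def using v_data by auto
  have wr: "well_rounded G" and sub: "G \<subseteq> Lambda_h" using G by (auto simp: WR_hex_def)
  obtain x y where g: "gb x y" and GL: "G = lattice_of (cols x y)" using wr_gb[OF wr] by blast
  have xL: "x \<in> Lambda_h" "y \<in> Lambda_h" using sub gb_basis_in GL by auto
  obtain N P2 D where h1: "x \<bullet> x = of_int N" and h2: "x \<bullet> y = of_int P2 / 2"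
    and e: "P2^2 + 3*D^2 = 4*N^2" and Dn: "D \<noteq> 0" and Npos: "N > 0" and PN: "\<bar>P2\<bar> \<le> N"
    using hex_gb_data[OF g xL] by metis
  have ceq: "\<bar>x \<bullet> y\<bar> / (x \<bullet> x) = \<bar>v1 \<bullet> v2\<bar> / (v1 \<bullet> v1)"
    using cos_lattice_angle[OF g] cos_lattice_angle[OF gd(1)] ang GL gd(2) by metis
  have rN: "real_of_int N > 0" "real_of_int N0 > 0" using Npos gd(4) by auto
  have "\<bar>real_of_int P2\<bar> * real_of_int N0 = \<bar>real_of_int X0\<bar> * real_of_int N"
    using ceq rN unfolding h1 h2 vd by (simp add: abs_divide field_simps)
  hence i1: "\<bar>P2\<bar> * N0 = \<bar>X0\<bar> * N" by (metis of_int_abs of_int_mult of_int_eq_iff)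
  have e0: "X0^2 + 3*D0^2 = 4*N0^2" unfolding X0_def D0_def N0_def by (simp add: power2_eq_square algebra_simps)
  have sqP: "(P2*N0)^2 = (X0*N)^2"
  proof -
    have "(P2*N0)^2 = (\<bar>P2\<bar> * N0)^2" by (simp add: power_mult_distrib)
    also have "\<dots> = (\<bar>X0\<bar> * N)^2" by (simp only: i1)
    also have "\<dots> = (X0*N)^2" by (simp add: power_mult_distrib)
    finally show ?thesis .
  qed
  have "3 * (D*N0)^2 = 3 * (D0*N)^2"
  proof -
    have "3 * (D*N0)^2 = (3*D^2) * N0^2" by (simp add: power_mult_distrib)
    also have "\<dots> = (4*N^2 - P2^2) * N0^2" using e by (metis add_diff_cancel_left')
    also have "\<dots> = 4*N^2*N0^2 - (P2*N0)^2" by (simp add: power_mult_distrib algebra_simps)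
    also have "\<dots> = 4*N^2*N0^2 - (X0*N)^2" by (simp only: sqP)
    also have "\<dots> = (4*N0^2 - X0^2) * N^2" by (simp add: power_mult_distrib algebra_simps)
    also have "\<dots> = (3*D0^2) * N^2" using e0 by (metis add_diff_cancel_left')
    also have "\<dots> = 3 * (D0*N)^2" by (simp add: power_mult_distrib)
    finally show ?thesis .
  qed
  hence "(D*N0)^2 = (D0*N)^2" by simp
  hence "\<bar>D*N0\<bar> = \<bar>D0*N\<bar>" by (metis power2_abs power2_eq_imp_eq abs_ge_zero)
  hence "\<bar>D\<bar>*N0 = D0*N" using gd(3,4) Npos by (simp add: abs_mult)
  hence "N0 dvd D0 * N" by (metis dvd_triv_right)
  hence "N0 dvd N" using gd(5) by (simp add: coprime_dvd_mult_right_iff)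
  then obtain k0 where k0: "N = N0 * k0" by blast
  have k0pos: "k0 > 0" using Npos gd(4) k0 by (simp add: zero_less_mult_iff)
  define k where "k = nat k0"
  have kr: "real k = real_of_int k0" using k0pos by (simp add: k_def)
  have "x \<bullet> x / (v1 \<bullet> v1) = real k"
    unfolding h1 vd kr k0 using rN by simp
  moreover obtain A where A: "orthogonal_matrix A"
    "lattice_of (cols x y) = (\<lambda>z. sqrt (x \<bullet> x / (v1 \<bullet> v1)) *\<^sub>R (A *v z)) ` lattice_of (cols v1 v2)"
    using sim_exists[OF g gd(1)[folded v1_def v2_def] ceq] by blast
  ultimately have "G = (\<lambda>z. sqrt (real k) *\<^sub>R (A *v z)) ` Gamma_theta m n"
    using GL gd(2) by simp
  moreover have "k > 0" using k0pos by (simp add: k_def)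
  ultimately show ?thesis using A(1) by blast
qed

lemma K_back:
  assumes hp: "hex_param t m n" and k: "k > 0" and A: "orthogonal_matrix A"
    and G: "G = (\<lambda>x. sqrt (real k) *\<^sub>R (A *v x)) ` Gamma_theta m n"
  shows "G \<in> WR_hex \<longleftrightarrow> G \<subseteq> Lambda_h" "lattice_angle G = lattice_angle (Gamma_theta m n)"
    "lat_min G = real k * lat_min (Gamma_theta m n)" "lat_det G = real k * lat_det (Gamma_theta m n)"
proof -
  define v1 where "v1 = hv m (m-n)"
  define v2 where "v2 = hv (m-n) m"
  define a where "a = sqrt (real k)"
  note gd = Gamma_data[OF hp, folded v1_def v2_def]
  have a: "a \<noteq> 0" using k by (simp add: a_def)
  have a2: "a\<^sup>2 = real k" by (simp add: a_def)
  note s = sim_gb[OF A a gd(1)]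
  have GL: "G = lattice_of (cols (a *\<^sub>R (A *v v1)) (a *\<^sub>R (A *v v2)))"
    unfolding G gd(2) a_def by (rule sim_image)
  show "G \<in> WR_hex \<longleftrightarrow> G \<subseteq> Lambda_h"
    unfolding WR_hex_def GL using gb_is_lattice[OF s(1)] gb_wr[OF s(1)] by auto
  show "lattice_angle G = lattice_angle (Gamma_theta m n)"
    unfolding GL gd(2) by (rule angle_sim[OF A a gd(1)])
  show "lat_min G = real k * lat_min (Gamma_theta m n)"
    unfolding GL gd(2) lat_min_gb[OF s(1)] lat_min_gb[OF gd(1)] s(3) a2 ..
  have d1: "det (cols v1 v2) \<noteq> 0" "det (cols (a *\<^sub>R (A *v v1)) (a *\<^sub>R (A *v v2))) \<noteq> 0"
    using gd(1) s(1) by (auto simp: gb_def)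
  show "lat_det G = real k * lat_det (Gamma_theta m n)"
    unfolding GL gd(2) lat_det_cols[OF d1(1)] lat_det_cols[OF d1(2)] s(2) a2 ..
qed

theorem theorem1p1:
  fixes t :: real
  shows "(pi/3 \<le> t \<and> t \<le> pi/2 \<longrightarrow> (t \<in> C_h \<longleftrightarrow> (\<exists>m n. hex_param t m n)))
    \<and> (\<forall>m n. t \<in> C_h \<and> hex_param t m n \<longrightarrow>
          Gamma_theta m n \<subseteq> Lambda_h
        \<and> C_h_class t = {G \<in> WR_hex. similar G (Gamma_theta m n)}
        \<and> lat_min (Gamma_theta m n) = of_int (n^2 - m*n + m^2)
        \<and> lat_index (Gamma_theta m n) = of_int ((2*m - n) * n)
        \<and> (\<forall>G \<in> C_h_class t. lat_min G \<ge> lat_min (Gamma_theta m n)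
                              \<and> lat_index G \<ge> lat_index (Gamma_theta m n))
        \<and> C_h_class t = {G. (\<exists>k::nat. \<exists>A. k > 0 \<and> orthogonal_matrix A
                              \<and> G = (\<lambda>x. sqrt (real k) *\<^sub>R (A *v x)) ` Gamma_theta m n)
                           \<and> G \<subseteq> Lambda_h})"
proof -
  have part1: "pi/3 \<le> t \<and> t \<le> pi/2 \<longrightarrow> (t \<in> C_h \<longleftrightarrow> (\<exists>m n. hex_param t m n))"
  proof
    assume r: "pi/3 \<le> t \<and> t \<le> pi/2"
    show "t \<in> C_h \<longleftrightarrow> (\<exists>m n. hex_param t m n)"
    proof
      assume "t \<in> C_h"
      then obtain G where "G \<in> WR_hex" "t = lattice_angle G" by (auto simp: C_h_def)
      thus "\<exists>m n. hex_param t m n" using P1_forward by blast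
    next
      assume "\<exists>m n. hex_param t m n"
      then obtain m n where hp: "hex_param t m n" by blast
      have "0 \<le> t" "t \<le> pi" using r pi_gt_zero by linarith+
      hence "lattice_angle (Gamma_theta m n) = t" using Gamma_angle[OF hp] by blast
      moreover have "Gamma_theta m n \<in> WR_hex" by (rule Gamma_WR[OF hp])
      ultimately show "t \<in> C_h" using r unfolding C_h_def by force
    qed
  qed
  have part2: "\<forall>m n. t \<in> C_h \<and> hex_param t m n \<longrightarrow>
          Gamma_theta m n \<subseteq> Lambda_h
        \<and> C_h_class t = {G \<in> WR_hex. similar G (Gamma_theta m n)}
        \<and> lat_min (Gamma_theta m n) = of_int (n^2 - m*n + m^2)
        \<and> lat_index (Gamma_theta m n) = of_int ((2*m - n) * n)
        \<and> (\<forall>G \<in> C_h_class t. lat_min G \<ge> lat_min (Gamma_theta m n)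
                              \<and> lat_index G \<ge> lat_index (Gamma_theta m n))
        \<and> C_h_class t = {G. (\<exists>k::nat. \<exists>A. k > 0 \<and> orthogonal_matrix A
                              \<and> G = (\<lambda>x. sqrt (real k) *\<^sub>R (A *v x)) ` Gamma_theta m n)
                           \<and> G \<subseteq> Lambda_h}"
  proof (intro allI impI)
    fix m n assume a: "t \<in> C_h \<and> hex_param t m n"
    hence tC: "t \<in> C_h" and hp: "hex_param t m n" by auto
    define \<Gamma> where "\<Gamma> = Gamma_theta m n"
    have tr: "pi/3 \<le> t" "t \<le> pi/2" using tC by (auto simp: C_h_def)
    have "0 \<le> t" "t \<le> pi" using tr pi_gt_zero by linarith+
    hence LA: "lattice_angle \<Gamma> = t" using Gamma_angle[OF hp] by (simp add: \<Gamma>_def)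
    have GW: "\<Gamma> \<in> WR_hex" unfolding \<Gamma>_def by (rule Gamma_WR[OF hp])
    note gd = Gamma_data[OF hp, folded \<Gamma>_def]
    have sub: "\<Gamma> \<subseteq> Lambda_h" using GW by (simp add: WR_hex_def)
    have minG: "lat_min \<Gamma> = of_int (n^2 - m*n + m^2)"
      unfolding gd(2) lat_min_gb[OF gd(1)] by (rule v_data(1))
    have dG: "det (cols (hv m (m-n)) (hv (m-n) m)) \<noteq> 0" using gd(1) by (simp add: gb_def)
    have detG: "lat_det \<Gamma> = sqrt 3 / 2 * of_int ((2*m-n)*n)"
    proof -
      have p: "real_of_int ((2*m-n)*n) > 0" using gd(3) by (simp only: of_int_0_less_iff)
      have "sqrt 3 / 2 * real_of_int ((2*m-n)*n) > 0" by (rule mult_pos_pos) (use p in auto)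
      thus ?thesis unfolding gd(2) lat_det_cols[OF dG] v_data(4) by (rule abs_of_pos)
    qed
    have dpos: "lat_det \<Gamma> \<ge> 0" unfolding gd(2) lat_det_cols[OF dG] by simp
    have idx: "lat_index \<Gamma> = of_int ((2*m - n) * n)"
      unfolding lat_index_def detG lat_det_Lambda by simp
    have clsK: "\<exists>k::nat. k > 0 \<and> (\<exists>A. orthogonal_matrix A \<and> G = (\<lambda>x. sqrt (real k) *\<^sub>R (A *v x)) ` \<Gamma>)"
      if "G \<in> C_h_class t" for G
      using K[OF hp, of G] that LA by (auto simp: C_h_class_def \<Gamma>_def)
    have class_eq: "C_h_class t = {G. (\<exists>k::nat. \<exists>A. k > 0 \<and> orthogonal_matrix A
                              \<and> G = (\<lambda>x. sqrt (real k) *\<^sub>R (A *v x)) ` \<Gamma>) \<and> G \<subseteq> Lambda_h}"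
    proof (intro set_eqI iffI)
      fix G assume G: "G \<in> C_h_class t"
      from clsK[OF G] obtain k A where "k > 0" "orthogonal_matrix A"
        "G = (\<lambda>x. sqrt (real k) *\<^sub>R (A *v x)) ` \<Gamma>" by blast
      moreover have "G \<subseteq> Lambda_h" using G by (simp add: C_h_class_def WR_hex_def)
      ultimately show "G \<in> {G. (\<exists>k::nat. \<exists>A. k > 0 \<and> orthogonal_matrix A
                              \<and> G = (\<lambda>x. sqrt (real k) *\<^sub>R (A *v x)) ` \<Gamma>) \<and> G \<subseteq> Lambda_h}" by blast
    next
      fix G assume "G \<in> {G. (\<exists>k::nat. \<exists>A. k > 0 \<and> orthogonal_matrix A
                              \<and> G = (\<lambda>x. sqrt (real k) *\<^sub>R (A *v x)) ` \<Gamma>) \<and> G \<subseteq> Lambda_h}"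
      then obtain k A where k: "k > 0" "orthogonal_matrix A"
        "G = (\<lambda>x. sqrt (real k) *\<^sub>R (A *v x)) ` Gamma_theta m n" and sG: "G \<subseteq> Lambda_h"
        unfolding \<Gamma>_def by blast
      note kb = K_back[OF hp k]
      show "G \<in> C_h_class t" using kb(1) kb(2) sG LA by (simp add: C_h_class_def \<Gamma>_def)
    qed
    have sim_eq: "C_h_class t = {G \<in> WR_hex. similar G \<Gamma>}"
    proof (intro set_eqI iffI)
      fix G assume G: "G \<in> C_h_class t"
      hence GW': "G \<in> WR_hex" by (simp add: C_h_class_def)
      from clsK[OF G] obtain k A where k: "k > 0" "orthogonal_matrix A"
        "G = (\<lambda>x. sqrt (real k) *\<^sub>R (A *v x)) ` \<Gamma>" by blast
      have sk: "sqrt (real k) \<noteq> 0" using k(1) by simp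
      have inv: "(1 / sqrt (real k)) *\<^sub>R (transpose A *v (sqrt (real k) *\<^sub>R (A *v z))) = z" for z
      proof -
        have "transpose A ** A = mat 1" using k(2) by (simp add: orthogonal_matrix_def)
        hence "transpose A *v (A *v z) = z" by (simp add: matrix_vector_mul_assoc)
        thus ?thesis using sk by (simp add: matrix_vector_mult_scaleR)
      qed
      have "(\<lambda>x. (1 / sqrt (real k)) *\<^sub>R (transpose A *v x)) ` G = \<Gamma>"
        unfolding k(3) image_image inv by simp
      moreover have "orthogonal_matrix (transpose A)" using k(2) by simp
      moreover have "1 / sqrt (real k) \<noteq> 0" using sk by simp
      ultimately have "similar G \<Gamma>" unfolding similar_def by metis
      thus "G \<in> {G \<in> WR_hex. similar G \<Gamma>}" using GW' by simp
    next
      fix G assume "G \<in> {G \<in> WR_hex. similar G \<Gamma>}"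
      hence GW': "G \<in> WR_hex" and sm: "similar G \<Gamma>" by auto
      obtain \<alpha> A where A: "\<alpha> \<noteq> 0" "orthogonal_matrix A" "\<Gamma> = (\<lambda>x. \<alpha> *\<^sub>R (A *v x)) ` G"
        using sm unfolding similar_def by blast
      have "well_rounded G" using GW' by (simp add: WR_hex_def)
      then obtain x y where g: "gb x y" and GL: "G = lattice_of (cols x y)" using wr_gb by blast
      have "\<Gamma> = lattice_of (cols (\<alpha> *\<^sub>R (A *v x)) (\<alpha> *\<^sub>R (A *v y)))"
        unfolding A(3) GL by (rule sim_image)
      hence "lattice_angle \<Gamma> = lattice_angle G" using angle_sim[OF A(2) A(1) g] GL by simp
      thus "G \<in> C_h_class t" using GW' LA by (simp add: C_h_class_def)
    qed
    have mins: "\<forall>G \<in> C_h_class t. lat_min G \<ge> lat_min \<Gamma> \<and> lat_index G \<ge> lat_index \<Gamma>"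
    proof
      fix G assume G: "G \<in> C_h_class t"
      from clsK[OF G] obtain k A where k: "k > 0" "orthogonal_matrix A"
        "G = (\<lambda>x. sqrt (real k) *\<^sub>R (A *v x)) ` Gamma_theta m n" by (auto simp: \<Gamma>_def)
      note kb = K_back[OF hp k, folded \<Gamma>_def]
      have k1: "real k \<ge> 1" using k(1) by simp
      have "real_of_int (n^2 - m*n + m^2) > 0" using gd(4) by (simp only: of_int_0_less_iff)
      hence m0: "lat_min \<Gamma> \<ge> 0" unfolding minG by simp
      have "lat_min \<Gamma> * 1 \<le> lat_min \<Gamma> * real k" using m0 k1 by (rule mult_left_mono[rotated])
      hence c1: "lat_min G \<ge> lat_min \<Gamma>" using kb(3) by (simp add: mult.commute)
      have "lat_det \<Gamma> * 1 \<le> lat_det \<Gamma> * real k" using dpos k1 by (rule mult_left_mono[rotated])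
      hence "lat_det \<Gamma> \<le> lat_det G" using kb(4) by (simp add: mult.commute)
      moreover have "lat_det Lambda_h > 0" unfolding lat_det_Lambda by simp
      ultimately have c2: "lat_index G \<ge> lat_index \<Gamma>" unfolding lat_index_def
        by (simp add: divide_right_mono)
      show "lat_min G \<ge> lat_min \<Gamma> \<and> lat_index G \<ge> lat_index \<Gamma>" using c1 c2 by simp
    qed
    show "Gamma_theta m n \<subseteq> Lambda_h
        \<and> C_h_class t = {G \<in> WR_hex. similar G (Gamma_theta m n)}
        \<and> lat_min (Gamma_theta m n) = of_int (n^2 - m*n + m^2)
        \<and> lat_index (Gamma_theta m n) = of_int ((2*m - n) * n)
        \<and> (\<forall>G \<in> C_h_class t. lat_min G \<ge> lat_min (Gamma_theta m n)
                              \<and> lat_index G \<ge> lat_index (Gamma_theta m n))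
        \<and> C_h_class t = {G. (\<exists>k::nat. \<exists>A. k > 0 \<and> orthogonal_matrix A
                              \<and> G = (\<lambda>x. sqrt (real k) *\<^sub>R (A *v x)) ` Gamma_theta m n)
                           \<and> G \<subseteq> Lambda_h}"
      using sub sim_eq minG idx mins class_eq unfolding \<Gamma>_def by blast
  qed
  show ?thesis using part1 part2 by blast
qed

end
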